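(* There is an absolute constant $c>0$ such that the following holds. Let $p$ be a prime and let $f_1, f_2:\mathbb F_p \to\mathbb C$. Define $F:\mathbb F_p\to\mathbb C$ by $$F(x) =\frac 1p \sum_{y\in\mathbb F_p} f_1 (x+y)\, f_2 (x+y^2).$$ Then $$\big\Vert F-\mathbb E[f_1]\cdot \mathbb E[f_2]\big\Vert_2 \leq c\,p^{-\frac 1{10}} \Vert f_1\Vert_2 \cdot \Vert f_2\Vert_2 .$$
   Context: For $f:\mathbb F_p\to\mathbb C$, $\mathbb E[f]=\frac1p\sum_{x\in\mathbb F_p} f(x)$ and $\Vert f\Vert_2=\big(\frac1p\sum_{x\in\mathbb F_p}|f(x)|^2\big)^{1/2}$ (normalized counting measure). In $F-\mathbb E[f_1]\cdot\mathbb E[f_2]$, the product $\mathbb E[f_1]\mathbb E[f_2]$ denotes the constant function. *)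

theory Defs
  imports "HOL-Analysis.Analysis" "HOL-Computational_Algebra.Primes"
begin

text \<open>F_p is modelled as the residues {0..<p} with arithmetic mod p.
Functions F_p -> C are functions nat => complex; only their values on {0..<p} matter.\<close>

definition expect :: "nat \<Rightarrow> (nat \<Rightarrow> complex) \<Rightarrow> complex" where
  "expect p f = (\<Sum>x<p. f x) / of_nat p"

definition norm2 :: "nat \<Rightarrow> (nat \<Rightarrow> complex) \<Rightarrow> real" where
  "norm2 p f = sqrt ((\<Sum>x<p. (cmod (f x))\<^sup>2) / real p)"

definition corrF :: "nat \<Rightarrow> (nat \<Rightarrow> complex) \<Rightarrow> (nat \<Rightarrow> complex) \<Rightarrow> nat \<Rightarrow> complex" where
  "corrF p f1 f2 x = (\<Sum>y<p. f1 ((x + y) mod p) * f2 ((x + y^2) mod p)) / of_nat p"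

end

theory Submission
  imports Defs "HOL-Library.Real_Mod"
begin


definition ee :: "nat \<Rightarrow> int \<Rightarrow> complex" where
  "ee p k = cis (2 * pi * of_int k / of_nat p)"

definition per :: "nat \<Rightarrow> (int \<Rightarrow> 'a) \<Rightarrow> bool" where
  "per p g \<longleftrightarrow> (\<forall>x. g x = g (x mod int p))"

lemma ee_add: "ee p (a + b) = ee p a * ee p b"
  unfolding ee_def by (simp add: cis_mult add_divide_distrib distrib_left)

lemma ee_norm[simp]: "norm (ee p a) = 1"
  unfolding ee_def by simp

lemma ee_cnj: "cnj (ee p a) = ee p (-a)"
  unfolding ee_def by (simp add: cis_cnj)

lemma ee_0[simp]: "ee p 0 = 1"
  unfolding ee_def by simp

lemma ee_mult_p: assumes "p > 0" shows "ee p (int p * k) = 1"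
proof -
  have "2 * pi * of_int (int p * k) / of_nat p = 2 * pi * of_int k"
    using assms by (simp add: field_simps)
  then show ?thesis unfolding ee_def by simp
qed

lemma ee_mod: assumes "p > 0" shows "ee p (a mod int p) = ee p a"
proof -
  have "a = a mod int p + int p * (a div int p)" by simp
  then have "ee p a = ee p (a mod int p) * ee p (int p * (a div int p))"
    by (metis ee_add)
  then show ?thesis using ee_mult_p[OF assms] by simp
qed

lemma ee_cong: assumes "p > 0" "a mod int p = b mod int p" shows "ee p a = ee p b"
  by (metis assms ee_mod)

lemma ee_eq_1: assumes "p > 0" "ee p k = 1" shows "int p dvd k"
proof -
  from assms(2) obtain n where n: "2 * pi * of_int k / of_nat p = of_int n * (2 * pi)"
    unfolding ee_def cis_eq_1_iff by blast
  then have "of_int k = (of_int (n * int p) :: real)"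
    using assms(1) pi_gt_zero by (simp add: field_simps)
  then have "k = n * int p" by linarith
  then show ?thesis by simp
qed

lemma ee_dvd: assumes "p > 0" "int p dvd k" shows "ee p k = 1"
  using assms ee_mult_p by (auto elim!: dvdE)

lemma per_ee: assumes "p > 0" shows "per p (\<lambda>x. ee p (k * x))"
  unfolding per_def
  by (metis assms ee_cong mod_mult_right_eq)

lemma per_cong: "per p g \<Longrightarrow> a mod int p = b mod int p \<Longrightarrow> g a = g b"
  unfolding per_def by metis

lemma sum_shift:
  assumes "p > 0" "per p g"
  shows "(\<Sum>x\<in>{0..<int p}. g (x + a)) = (\<Sum>x\<in>{0..<int p}. g x)"
proof -
  have "(\<Sum>x\<in>{0..<int p}. g (x + a)) = (\<Sum>x\<in>{0..<int p}. g ((x + a) mod int p))"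
    using assms(2) unfolding per_def by metis
  also have "\<dots> = (\<Sum>x\<in>{0..<int p}. g x)"
  proof (rule sum.reindex_bij_betw[of "\<lambda>x. (x + a) mod int p", unfolded o_def])
    show "bij_betw (\<lambda>x. (x + a) mod int p) {0..<int p} {0..<int p}"
    proof (rule bij_betwI[where g = "\<lambda>y. (y - a) mod int p"])
      show "(\<lambda>x. (x + a) mod int p) \<in> {0..<int p} \<rightarrow> {0..<int p}" using assms(1) by auto
      show "(\<lambda>y. (y - a) mod int p) \<in> {0..<int p} \<rightarrow> {0..<int p}" using assms(1) by auto
      fix x assume "x \<in> {0..<int p}"
      then show "((x + a) mod int p - a) mod int p = x"
        by (simp add: mod_simps)
    next
      fix y assume "y \<in> {0..<int p}"
      then show "((y - a) mod int p + a) mod int p = y"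
        by (simp add: mod_simps)
    qed
  qed
  finally show ?thesis .
qed

lemma sum_refl:
  assumes "p > 0" "per p g"
  shows "(\<Sum>x\<in>{0..<int p}. g (a - x)) = (\<Sum>x\<in>{0..<int p}. g x)"
proof -
  have "(\<Sum>x\<in>{0..<int p}. g (a - x)) = (\<Sum>x\<in>{0..<int p}. g ((a - x) mod int p))"
    using assms(2) unfolding per_def by metis
  also have "\<dots> = (\<Sum>x\<in>{0..<int p}. g x)"
  proof (rule sum.reindex_bij_betw[of "\<lambda>x. (a - x) mod int p", unfolded o_def])
    show "bij_betw (\<lambda>x. (a - x) mod int p) {0..<int p} {0..<int p}"
    proof (rule bij_betwI[where g = "\<lambda>y. (a - y) mod int p"])
      show "(\<lambda>x. (a - x) mod int p) \<in> {0..<int p} \<rightarrow> {0..<int p}" using assms(1) by auto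
      show "(\<lambda>y. (a - y) mod int p) \<in> {0..<int p} \<rightarrow> {0..<int p}" using assms(1) by auto
      fix x assume "x \<in> {0..<int p}"
      then show "(a - (a - x) mod int p) mod int p = x"
        by (simp add: mod_simps)
    next
      fix y assume "y \<in> {0..<int p}"
      then show "(a - (a - y) mod int p) mod int p = y"
        by (simp add: mod_simps)
    qed
  qed
  finally show ?thesis .
qed

lemma orth:
  assumes "p > 0"
  shows "(\<Sum>x\<in>{0..<int p}. ee p (k * x)) = (if int p dvd k then of_nat p else 0)"
proof (cases "int p dvd k")
  case True
  then have "\<And>x. ee p (k * x) = 1" using ee_dvd[OF assms] by auto
  then show ?thesis using True by simp
next
  case False
  define S where "S = (\<Sum>x\<in>{0..<int p}. ee p (k * x))"
  have "S * ee p k = (\<Sum>x\<in>{0..<int p}. ee p (k * (x + 1)))"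
    unfolding S_def sum_distrib_right by (simp add: ee_add[symmetric] algebra_simps)
  also have "\<dots> = S" unfolding S_def
    by (rule sum_shift[OF assms per_ee[OF assms]])
  finally have "S * (ee p k - 1) = 0" by (simp add: algebra_simps)
  moreover have "ee p k \<noteq> 1" using ee_eq_1[OF assms] False by blast
  ultimately have "S = 0" by simp
  then show ?thesis using False S_def by simp
qed



definition fh :: "nat \<Rightarrow> (int \<Rightarrow> complex) \<Rightarrow> int \<Rightarrow> complex" where
  "fh p f \<eta> = (\<Sum>w\<in>{0..<int p}. f w * ee p (-(\<eta> * w))) / of_nat p"

lemma dvd_P: assumes "a \<in> {0..<int p}" "b \<in> {0..<int p}"
  shows "int p dvd (a - b) \<longleftrightarrow> a = b"
proof
  assume "int p dvd (a - b)"
  then have "a mod int p = b mod int p" by (simp add: mod_eq_dvd_iff)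
  then show "a = b" using assms by simp
qed simp

lemma sum_delta_P:
  assumes "c \<in> {0..<int p}"
  shows "(\<Sum>v\<in>{0..<int p}. (if int p dvd (c - v) then g v else 0)) = g c"
proof -
  have "(\<Sum>v\<in>{0..<int p}. (if int p dvd (c - v) then g v else 0))
      = (\<Sum>v\<in>{0..<int p}. (if v = c then g v else 0))"
    by (rule sum.cong) (use dvd_P[OF assms] in auto)
  also have "\<dots> = g c" using assms by (simp add: sum.delta')
  finally show ?thesis .
qed

lemma per_fh: assumes "p > 0" shows "per p (fh p f)"
  unfolding per_def fh_def
proof
  fix \<eta>
  have "\<And>w. ee p (-(\<eta> * w)) = ee p (-((\<eta> mod int p) * w))"
    by (rule ee_cong[OF assms]) (metis mod_minus_eq mod_mult_left_eq)
  then show "(\<Sum>w = 0..<int p. f w * ee p (- (\<eta> * w))) / of_nat p =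
        (\<Sum>w = 0..<int p. f w * ee p (- (\<eta> mod int p * w))) / of_nat p" by simp
qed

lemma fourier_inv:
  assumes "p > 0" "per p f"
  shows "f w = (\<Sum>\<eta>\<in>{0..<int p}. fh p f \<eta> * ee p (\<eta> * w))"
proof -
  have "(\<Sum>\<eta>\<in>{0..<int p}. fh p f \<eta> * ee p (\<eta> * w))
      = (\<Sum>\<eta>\<in>{0..<int p}. \<Sum>v\<in>{0..<int p}. f v * ee p ((w - v) * \<eta>) / of_nat p)"
    unfolding fh_def sum_divide_distrib sum_distrib_right
    by (intro sum.cong refl) (simp add: ee_add[symmetric] algebra_simps)
  also have "\<dots> = (\<Sum>v\<in>{0..<int p}. f v * (\<Sum>\<eta>\<in>{0..<int p}. ee p ((w - v) * \<eta>)) / of_nat p)"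
    by (subst sum.swap) (simp add: sum_distrib_left sum_divide_distrib)
  also have "\<dots> = (\<Sum>v\<in>{0..<int p}. (if int p dvd (w mod int p - v) then f v else 0))"
  proof (intro sum.cong refl)
    fix v
    have "int p dvd (w - v) \<longleftrightarrow> int p dvd (w mod int p - v)"
      by (metis mod_diff_left_eq mod_eq_0_iff_dvd)
    then show "f v * (\<Sum>\<eta>\<in>{0..<int p}. ee p ((w - v) * \<eta>)) / of_nat p
      = (if int p dvd (w mod int p - v) then f v else 0)"
      using assms(1) by (simp add: orth)
  qed
  also have "\<dots> = f (w mod int p)"
    by (rule sum_delta_P) (use assms(1) in auto)
  also have "\<dots> = f w" using assms(2) unfolding per_def by metis
  finally show ?thesis by simp
qed



lemma cnj_fh: "cnj (fh p f \<eta>) = (\<Sum>w\<in>{0..<int p}. cnj (f w) * ee p (\<eta> * w)) / of_nat p"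
  unfolding fh_def by (simp add: ee_cnj)

lemma norm_sq_c: "complex_of_real ((cmod z)\<^sup>2) = z * cnj z"
  by (rule complex_norm_square)

lemma sum_norm_sq_c: "complex_of_real (\<Sum>x\<in>A. (cmod (g x))\<^sup>2) = (\<Sum>x\<in>A. g x * cnj (g x))"
  unfolding of_real_sum by (simp only: complex_norm_square)

lemma parseval_c:
  assumes "p > 0" "per p f"
  shows "(\<Sum>\<eta>\<in>{0..<int p}. fh p f \<eta> * cnj (fh p f \<eta>))
       = (\<Sum>w\<in>{0..<int p}. f w * cnj (f w)) / of_nat p"
proof -
  have "(\<Sum>\<eta>\<in>{0..<int p}. fh p f \<eta> * cnj (fh p f \<eta>))
      = (\<Sum>\<eta>\<in>{0..<int p}. \<Sum>w\<in>{0..<int p}. cnj (f w) * (fh p f \<eta> * ee p (\<eta> * w)) / of_nat p)"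
    unfolding cnj_fh sum_divide_distrib sum_distrib_left
    by (intro sum.cong refl) (simp add: algebra_simps)
  also have "\<dots> = (\<Sum>w\<in>{0..<int p}. cnj (f w) * (\<Sum>\<eta>\<in>{0..<int p}. fh p f \<eta> * ee p (\<eta> * w)) / of_nat p)"
    by (subst sum.swap) (simp add: sum_distrib_left sum_divide_distrib)
  also have "\<dots> = (\<Sum>w\<in>{0..<int p}. cnj (f w) * f w / of_nat p)"
    using fourier_inv[OF assms] by simp
  finally show ?thesis by (simp add: sum_divide_distrib mult.commute)
qed

lemma parseval:
  assumes "p > 0" "per p f"
  shows "(\<Sum>\<eta>\<in>{0..<int p}. (cmod (fh p f \<eta>))\<^sup>2) = (\<Sum>w\<in>{0..<int p}. (cmod (f w))\<^sup>2) / real p"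
proof -
  have "complex_of_real (\<Sum>\<eta>\<in>{0..<int p}. (cmod (fh p f \<eta>))\<^sup>2)
      = complex_of_real ((\<Sum>w\<in>{0..<int p}. (cmod (f w))\<^sup>2) / real p)"
    unfolding of_real_divide sum_norm_sq_c parseval_c[OF assms] by simp
  then show ?thesis using of_real_eq_iff by blast
qed

lemma trig_parseval_c:
  assumes "p > 0"
  shows "(\<Sum>x\<in>{0..<int p}. (\<Sum>\<xi>\<in>{0..<int p}. C \<xi> * ee p (\<xi> * x)) * cnj (\<Sum>\<xi>\<in>{0..<int p}. C \<xi> * ee p (\<xi> * x)))
     = of_nat p * (\<Sum>\<xi>\<in>{0..<int p}. C \<xi> * cnj (C \<xi>))"
proof -
  have "(\<Sum>x\<in>{0..<int p}. (\<Sum>\<xi>\<in>{0..<int p}. C \<xi> * ee p (\<xi> * x)) * cnj (\<Sum>\<xi>\<in>{0..<int p}. C \<xi> * ee p (\<xi> * x)))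
      = (\<Sum>x\<in>{0..<int p}. \<Sum>\<zeta>\<in>{0..<int p}. \<Sum>\<xi>\<in>{0..<int p}. C \<xi> * cnj (C \<zeta>) * ee p ((\<xi> - \<zeta>) * x))"
    by (simp add: sum_distrib_left sum_distrib_right ee_cnj ee_add[symmetric] algebra_simps)
  also have "\<dots> = (\<Sum>\<zeta>\<in>{0..<int p}. \<Sum>x\<in>{0..<int p}. \<Sum>\<xi>\<in>{0..<int p}. C \<xi> * cnj (C \<zeta>) * ee p ((\<xi> - \<zeta>) * x))"
    by (rule sum.swap)
  also have "\<dots> = (\<Sum>\<zeta>\<in>{0..<int p}. \<Sum>\<xi>\<in>{0..<int p}. \<Sum>x\<in>{0..<int p}. C \<xi> * cnj (C \<zeta>) * ee p ((\<xi> - \<zeta>) * x))"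
    by (rule sum.cong[OF refl], rule sum.swap)
  also have "\<dots> = (\<Sum>\<zeta>\<in>{0..<int p}. \<Sum>\<xi>\<in>{0..<int p}. C \<xi> * cnj (C \<zeta>) * (\<Sum>x\<in>{0..<int p}. ee p ((\<xi> - \<zeta>) * x)))"
    by (simp add: sum_distrib_left)
  also have "\<dots> = (\<Sum>\<zeta>\<in>{0..<int p}. \<Sum>\<xi>\<in>{0..<int p}. (if int p dvd (\<zeta> - \<xi>) then C \<xi> * cnj (C \<xi>) * of_nat p else 0))"
    using assms by (intro sum.cong refl) (auto simp: orth dvd_P)
  also have "\<dots> = (\<Sum>\<xi>\<in>{0..<int p}. C \<xi> * cnj (C \<xi>) * of_nat p)"
    by (intro sum.cong refl sum_delta_P) auto
  finally show ?thesis by (simp add: sum_distrib_left mult.commute)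
qed

lemma trig_parseval:
  assumes "p > 0"
  shows "(\<Sum>x\<in>{0..<int p}. (cmod (\<Sum>\<xi>\<in>{0..<int p}. C \<xi> * ee p (\<xi> * x)))\<^sup>2)
     = real p * (\<Sum>\<xi>\<in>{0..<int p}. (cmod (C \<xi>))\<^sup>2)"
proof -
  have "complex_of_real (\<Sum>x\<in>{0..<int p}. (cmod (\<Sum>\<xi>\<in>{0..<int p}. C \<xi> * ee p (\<xi> * x)))\<^sup>2)
     = complex_of_real (real p * (\<Sum>\<xi>\<in>{0..<int p}. (cmod (C \<xi>))\<^sup>2))"
    unfolding of_real_mult sum_norm_sq_c trig_parseval_c[OF assms] by simp
  then show ?thesis using of_real_eq_iff by blast
qed

lemma fh_0: "fh p f 0 = (\<Sum>w\<in>{0..<int p}. f w) / of_nat p"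
  unfolding fh_def by simp



lemma per_ee_quad: assumes "p > 0"
  shows "per p (\<lambda>h. ee p (a * h\<^sup>2 + b * h + c))"
  unfolding per_def
proof
  fix h
  have "(a * h\<^sup>2 + b * h + c) mod int p = (a * (h mod int p)\<^sup>2 + b * (h mod int p) + c) mod int p"
  proof -
    have 1: "(a * h\<^sup>2) mod int p = (a * (h mod int p)\<^sup>2) mod int p"
      by (metis mod_mult_right_eq power_mod)
    have 2: "(b * h) mod int p = (b * (h mod int p)) mod int p"
      by (metis mod_mult_right_eq)
    show ?thesis by (metis 1 2 mod_add_cong)
  qed
  then show "ee p (a * h\<^sup>2 + b * h + c) = ee p (a * (h mod int p)\<^sup>2 + b * (h mod int p) + c)"
    by (rule ee_cong[OF assms])
qed

lemma prime_odd_dvd: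
  assumes "prime p" "odd p" "int p dvd (2 * a * t)" "\<not> int p dvd a"
  shows "int p dvd t"
proof -
  have pi: "prime (int p)" using assms(1) by simp
  have "\<not> int p dvd 2"
  proof
    assume "int p dvd 2"
    then have "p dvd 2" by presburger
    then have "p \<le> 2" by (simp add: dvd_imp_le)
    moreover have "p \<ge> 2" using assms(1) prime_ge_2_nat by blast
    ultimately show False using assms(2) by auto
  qed
  then show ?thesis using assms(3,4) pi by (metis prime_dvd_mult_iff)
qed

lemma gauss_sq_c:
  assumes "prime p" "odd p" "\<not> int p dvd a"
  shows "(\<Sum>h\<in>{0..<int p}. ee p (a * h\<^sup>2 + b * h)) * cnj (\<Sum>h\<in>{0..<int p}. ee p (a * h\<^sup>2 + b * h)) = of_nat p"
proof -
  have p0: "p > 0" using assms(1) prime_gt_0_nat by blast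
  have "(\<Sum>h\<in>{0..<int p}. ee p (a * h\<^sup>2 + b * h)) * cnj (\<Sum>h\<in>{0..<int p}. ee p (a * h\<^sup>2 + b * h))
      = (\<Sum>h\<in>{0..<int p}. \<Sum>z\<in>{0..<int p}. ee p (a * h\<^sup>2 + b * h) * ee p (- (a * z\<^sup>2 + b * z)))"
    by (simp only: sum_product cnj_sum ee_cnj)
  also have "\<dots> = (\<Sum>h\<in>{0..<int p}. \<Sum>z\<in>{0..<int p}. ee p (a * h\<^sup>2 + b * h + (- (a * z\<^sup>2 + b * z))))"
    by (simp only: ee_add)
  also have "\<dots> = (\<Sum>z\<in>{0..<int p}. \<Sum>h\<in>{0..<int p}. ee p (a * h\<^sup>2 + b * h + (- (a * z\<^sup>2 + b * z))))"
    by (rule sum.swap)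
  also have "\<dots> = (\<Sum>z\<in>{0..<int p}. \<Sum>t\<in>{0..<int p}. ee p (a * (t + z)\<^sup>2 + b * (t + z) + (- (a * z\<^sup>2 + b * z))))"
    by (rule sum.cong[OF refl], rule sum_shift[OF p0 per_ee_quad[OF p0], symmetric])
  also have "\<dots> = (\<Sum>z\<in>{0..<int p}. \<Sum>t\<in>{0..<int p}. ee p (a * t\<^sup>2 + b * t) * ee p ((2 * a * t) * z))"
  proof (intro sum.cong refl)
    fix z t
    have "a * (t + z)\<^sup>2 + b * (t + z) + (- (a * z\<^sup>2 + b * z)) = (a * t\<^sup>2 + b * t) + (2 * a * t) * z"
      by (simp add: power2_eq_square algebra_simps)
    then show "ee p (a * (t + z)\<^sup>2 + b * (t + z) + (- (a * z\<^sup>2 + b * z))) = ee p (a * t\<^sup>2 + b * t) * ee p ((2 * a * t) * z)"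
      by (simp only: ee_add)
  qed
  also have "\<dots> = (\<Sum>t\<in>{0..<int p}. \<Sum>z\<in>{0..<int p}. ee p (a * t\<^sup>2 + b * t) * ee p ((2 * a * t) * z))"
    by (rule sum.swap)
  also have "\<dots> = (\<Sum>t\<in>{0..<int p}. ee p (a * t\<^sup>2 + b * t) * (\<Sum>z\<in>{0..<int p}. ee p ((2 * a * t) * z)))"
    by (simp only: sum_distrib_left)
  also have "\<dots> = (\<Sum>t\<in>{0..<int p}. (if t = 0 then of_nat p else 0))"
  proof (intro sum.cong refl)
    fix t assume t: "t \<in> {0..<int p}"
    have "int p dvd (2 * a * t) \<longleftrightarrow> t = 0"
    proof
      assume "int p dvd (2 * a * t)"
      then have "int p dvd t" using prime_odd_dvd assms by blast
      then show "t = 0" using t dvd_P[of t p 0] p0 by auto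
    qed simp
    then show "ee p (a * t\<^sup>2 + b * t) * (\<Sum>z\<in>{0..<int p}. ee p ((2 * a * t) * z)) = (if t = 0 then of_nat p else 0)"
      using p0 by (simp add: orth)
  qed
  also have "\<dots> = of_nat p" using p0 by simp
  finally show ?thesis .
qed

lemma gauss_norm:
  assumes "prime p" "odd p" "\<not> int p dvd a"
  shows "cmod (\<Sum>h\<in>{0..<int p}. ee p (a * h\<^sup>2 + b * h)) = sqrt (real p)"
proof -
  define S where "S = (\<Sum>h\<in>{0..<int p}. ee p (a * h\<^sup>2 + b * h))"
  have "complex_of_real ((cmod S)\<^sup>2) = complex_of_real (real p)"
    using gauss_sq_c[OF assms, of b] complex_norm_square[of S] unfolding S_def by simp
  then have "(cmod S)\<^sup>2 = real p"
    using of_real_eq_iff by blast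
  then show ?thesis using real_sqrt_unique[of "cmod S" "real p"] unfolding S_def by simp
qed

lemma quad_bound:
  assumes "prime p" "odd p" "\<not> int p dvd b"
  shows "cmod (\<Sum>h\<in>{0..<int p}. ee p (a * h\<^sup>2 + b * h)) \<le> sqrt (real p)"
proof (cases "int p dvd a")
  case True
  have p0: "p > 0" using assms(1) prime_gt_0_nat by blast
  have "\<And>h. ee p (a * h\<^sup>2 + b * h) = ee p (b * h)"
  proof -
    fix h
    from True obtain m where "a = int p * m" by (auto elim: dvdE)
    then have "(a * h\<^sup>2 + b * h) mod int p = (b * h) mod int p"
      by (simp add: mult.assoc)
    then show "ee p (a * h\<^sup>2 + b * h) = ee p (b * h)" by (rule ee_cong[OF p0])
  qed
  then show ?thesis using assms(3) p0 by (simp add: orth)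
next
  case False
  then show ?thesis using gauss_norm assms by simp
qed

lemma complete_sq:
  assumes "p > 0" "xi * u = 1 + int p * m"
  shows "(\<Sum>y\<in>{0..<int p}. ee p (xi * y\<^sup>2 + 2 * k * y)) = ee p (- (k\<^sup>2 * u)) * (\<Sum>y\<in>{0..<int p}. ee p (xi * y\<^sup>2))"
proof -
  note m = assms(2)
  have "(\<Sum>y\<in>{0..<int p}. ee p (xi * y\<^sup>2)) = (\<Sum>y\<in>{0..<int p}. ee p (xi * (y + k * u)\<^sup>2 + 0 * (y + k * u) + 0))"
    using sum_shift[OF assms(1) per_ee_quad[OF assms(1), of xi 0 0], of "k * u"] by simp
  also have "\<dots> = (\<Sum>y\<in>{0..<int p}. ee p (k\<^sup>2 * u) * ee p (xi * y\<^sup>2 + 2 * k * y))"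
  proof (intro sum.cong refl)
    fix y
    have "xi * (y + k * u)\<^sup>2 = (xi * y\<^sup>2 + 2 * k * y + k\<^sup>2 * u) + int p * (m * (2 * k * y + k\<^sup>2 * u))"
    proof -
      have "xi * (y + k * u)\<^sup>2 = xi * y\<^sup>2 + 2 * k * y * (xi * u) + k\<^sup>2 * u * (xi * u)"
        by (simp add: power2_eq_square algebra_simps)
      then show ?thesis unfolding m by (simp add: algebra_simps)
    qed
    then have E: "xi * (y + k * u)\<^sup>2 + 0 * (y + k * u) + 0 = (k\<^sup>2 * u + (xi * y\<^sup>2 + 2 * k * y)) + int p * (m * (2 * k * y + k\<^sup>2 * u))"
      by (simp add: algebra_simps)
    have "(xi * (y + k * u)\<^sup>2 + 0 * (y + k * u) + 0) mod int p = (k\<^sup>2 * u + (xi * y\<^sup>2 + 2 * k * y)) mod int p"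
      unfolding E by (rule mod_mult_self2)
    then show "ee p (xi * (y + k * u)\<^sup>2 + 0 * (y + k * u) + 0) = ee p (k\<^sup>2 * u) * ee p (xi * y\<^sup>2 + 2 * k * y)"
      by (metis ee_add ee_cong[OF assms(1)])
  qed
  finally have S0: "(\<Sum>y\<in>{0..<int p}. ee p (xi * y\<^sup>2)) = ee p (k\<^sup>2 * u) * (\<Sum>y\<in>{0..<int p}. ee p (xi * y\<^sup>2 + 2 * k * y))"
    by (simp only: sum_distrib_left)
  have E1: "ee p (- (k\<^sup>2 * u)) * ee p (k\<^sup>2 * u) = 1"
    using ee_add[of p "- (k\<^sup>2 * u)" "k\<^sup>2 * u"] by simp
  show ?thesis unfolding S0 mult.assoc[symmetric] E1 by simp
qed

lemma inverse_exists:
  assumes "prime p" "\<not> int p dvd xi"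
  shows "\<exists>u m. xi * u = 1 + int p * m"
proof -
  have "prime (int p)" using assms(1) by simp
  then have "coprime xi (int p)" using assms(2)
    by (metis coprime_commute prime_imp_coprime)
  then have g: "gcd xi (int p) = 1" by simp
  obtain u v where "u * xi + v * int p = gcd xi (int p)" using bezout_int by blast
  then have "xi * u = 1 + int p * (- v)" using g by (simp add: algebra_simps)
  then show ?thesis by blast
qed



definition Wf :: "nat \<Rightarrow> int \<Rightarrow> int \<Rightarrow> int \<Rightarrow> complex" where
  "Wf p xi eta h = (\<Sum>y\<in>{0..<int p}. ee p (xi * y\<^sup>2 + 2 * (eta * h) * y + (- (eta * h) - eta * h\<^sup>2))) / of_nat p"

definition Kf :: "nat \<Rightarrow> int \<Rightarrow> int \<Rightarrow> int \<Rightarrow> complex" where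
  "Kf p xi eta eta' = (\<Sum>h\<in>{0..<int p}. Wf p xi eta h * cnj (Wf p xi eta' h))"

lemma Wf_split: "Wf p xi eta h = ee p (- (eta * h) - eta * h\<^sup>2) * (\<Sum>y\<in>{0..<int p}. ee p (xi * y\<^sup>2 + 2 * (eta * h) * y)) / of_nat p"
  unfolding Wf_def by (simp add: ee_add sum_distrib_left mult_ac)

lemma Wf_norm_le1: assumes "p > 0" shows "cmod (Wf p xi eta h) \<le> 1"
proof -
  have "cmod (\<Sum>y\<in>{0..<int p}. ee p (xi * y\<^sup>2 + 2 * (eta * h) * y + (- (eta * h) - eta * h\<^sup>2)))
      \<le> (\<Sum>y\<in>{0..<int p}. cmod (ee p (xi * y\<^sup>2 + 2 * (eta * h) * y + (- (eta * h) - eta * h\<^sup>2))))"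
    by (rule norm_sum)
  also have "\<dots> = real p" by simp
  finally show ?thesis using assms unfolding Wf_def by (simp add: norm_divide divide_le_eq)
qed

lemma Wf_norm_gauss:
  assumes "prime p" "odd p" "\<not> int p dvd xi"
  shows "cmod (Wf p xi eta h) = sqrt (real p) / real p"
proof -
  have "cmod (\<Sum>y\<in>{0..<int p}. ee p (xi * y\<^sup>2 + 2 * (eta * h) * y)) = sqrt (real p)"
    by (rule gauss_norm[OF assms])
  then show ?thesis unfolding Wf_split by (simp add: norm_mult norm_divide)
qed

lemma Kf_le1:
  assumes "prime p" "odd p" "\<not> int p dvd xi"
  shows "cmod (Kf p xi eta eta') \<le> 1"
proof -
  have p0: "p > 0" using assms(1) prime_gt_0_nat by blast
  have "cmod (Kf p xi eta eta') \<le> (\<Sum>h\<in>{0..<int p}. cmod (Wf p xi eta h * cnj (Wf p xi eta' h)))"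
    unfolding Kf_def by (rule norm_sum)
  also have "\<dots> = (\<Sum>h\<in>{0..<int p}. 1 / real p)"
  proof (intro sum.cong refl)
    fix h
    have "sqrt (real p) * sqrt (real p) = real p" using p0 by simp
    then show "cmod (Wf p xi eta h * cnj (Wf p xi eta' h)) = 1 / real p"
      using p0 by (simp add: norm_mult Wf_norm_gauss[OF assms] field_simps)
  qed
  also have "\<dots> = 1" using p0 by simp
  finally show ?thesis .
qed

lemma Kf_xi0_le1:
  assumes "prime p" "odd p" "\<not> int p dvd eta"
  shows "cmod (Kf p 0 eta eta') \<le> 1"
proof -
  have p0: "p > 0" using assms(1) prime_gt_0_nat by blast
  have W0: "Wf p 0 eta h = 0" if h: "h \<in> {0..<int p}" "h \<noteq> 0" for h
  proof -
    have "\<not> int p dvd (2 * eta * h)"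
    proof
      assume "int p dvd (2 * eta * h)"
      then have "int p dvd h" using prime_odd_dvd assms by blast
      then show False using h dvd_P[of h p 0] by auto
    qed
    then have "(\<Sum>y\<in>{0..<int p}. ee p ((2 * eta * h) * y)) = 0" using p0 by (simp add: orth)
    then show ?thesis unfolding Wf_split by (simp add: mult.assoc)
  qed
  have "Kf p 0 eta eta' = (\<Sum>h\<in>{0..<int p}. if h = 0 then Wf p 0 eta h * cnj (Wf p 0 eta' h) else 0)"
    unfolding Kf_def by (intro sum.cong refl) (auto simp: W0)
  also have "\<dots> = Wf p 0 eta 0 * cnj (Wf p 0 eta' 0)" using p0 by simp
  finally have "cmod (Kf p 0 eta eta') = cmod (Wf p 0 eta 0) * cmod (Wf p 0 eta' 0)"
    by (simp add: norm_mult)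
  also have "\<dots> \<le> 1 * 1"
    by (intro mult_mono Wf_norm_le1 p0) auto
  finally show ?thesis by simp
qed

lemma Kf_small:
  assumes "prime p" "odd p" "\<not> int p dvd xi" "eta \<in> {0..<int p}" "eta' \<in> {0..<int p}" "eta \<noteq> eta'"
  shows "cmod (Kf p xi eta eta') \<le> 1 / sqrt (real p)"
proof -
  have p0: "p > 0" using assms(1) prime_gt_0_nat by blast
  obtain u m where um: "xi * u = 1 + int p * m" using inverse_exists[OF assms(1,3)] by blast
  define G where "G = (\<Sum>y\<in>{0..<int p}. ee p (xi * y\<^sup>2))"
  have GG: "G * cnj G = of_nat p"
    using gauss_sq_c[OF assms(1,2,3), of 0] unfolding G_def by simp
  have Wr: "Wf p xi e h = ee p (- (e * h) - e * h\<^sup>2 + (- ((e * h)\<^sup>2 * u))) * G / of_nat p" for e h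
  proof -
    have "Wf p xi e h = ee p (- (e * h) - e * h\<^sup>2) * (\<Sum>y\<in>{0..<int p}. ee p (xi * y\<^sup>2 + 2 * (e * h) * y)) / of_nat p"
      by (rule Wf_split)
    also have "\<dots> = ee p (- (e * h) - e * h\<^sup>2) * (ee p (- ((e * h)\<^sup>2 * u)) * G) / of_nat p"
      unfolding complete_sq[OF p0 um] G_def ..
    finally show ?thesis by (simp only: ee_add mult.assoc)
  qed
  define al where "al = - eta - eta\<^sup>2 * u + eta' + eta'\<^sup>2 * u"
  define be where "be = eta' - eta"
  have prod: "Wf p xi eta h * cnj (Wf p xi eta' h) = ee p (al * h\<^sup>2 + be * h) / of_nat p" for h
  proof -
    define A where "A = - (eta * h) - eta * h\<^sup>2 + (- ((eta * h)\<^sup>2 * u))"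
    define A' where "A' = - (eta' * h) - eta' * h\<^sup>2 + (- ((eta' * h)\<^sup>2 * u))"
    have "Wf p xi eta h * cnj (Wf p xi eta' h) = (ee p A * ee p (- A')) * (G * cnj G) / (of_nat p * of_nat p)"
      unfolding Wr A_def A'_def by (simp add: ee_cnj mult_ac)
    also have "\<dots> = ee p (A + (- A')) * (G * cnj G) / (of_nat p * of_nat p)" by (simp only: ee_add)
    finally have "Wf p xi eta h * cnj (Wf p xi eta' h) = ee p (A + (- A')) * (G * cnj G) / (of_nat p * of_nat p)" .
    moreover have "A + (- A') = al * h\<^sup>2 + be * h"
      unfolding A_def A'_def al_def be_def by (simp add: power2_eq_square algebra_simps)
    ultimately show ?thesis unfolding GG using p0 by simp
  qed
  have nb: "\<not> int p dvd be" unfolding be_def using dvd_P[OF assms(5,4)] assms(6) by auto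
  have "cmod (Kf p xi eta eta') = cmod (\<Sum>h\<in>{0..<int p}. ee p (al * h\<^sup>2 + be * h)) / real p"
    unfolding Kf_def prod sum_divide_distrib[symmetric] by (simp add: norm_divide)
  also have "\<dots> \<le> sqrt (real p) / real p"
    using quad_bound[OF assms(1,2) nb, of al] p0 by (simp add: divide_right_mono)
  also have "\<dots> = 1 / sqrt (real p)" using p0 by (simp add: field_simps real_div_sqrt)
  finally show ?thesis .
qed



definition Psi :: "nat \<Rightarrow> (int \<Rightarrow> complex) \<Rightarrow> int \<Rightarrow> int \<Rightarrow> complex" where
  "Psi p f x h = (\<Sum>y\<in>{0..<int p}. f (x + y\<^sup>2) * cnj (f (x + h + (y - h)\<^sup>2))) / of_nat p"

definition af :: "nat \<Rightarrow> (int \<Rightarrow> complex) \<Rightarrow> int \<Rightarrow> int \<Rightarrow> complex" where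
  "af p f xi eta = fh p f (xi + eta) * cnj (fh p f eta)"

definition Cf :: "nat \<Rightarrow> (int \<Rightarrow> complex) \<Rightarrow> int \<Rightarrow> int \<Rightarrow> complex" where
  "Cf p f xi h = (\<Sum>eta\<in>{0..<int p}. af p f xi eta * Wf p xi eta h)"

lemma psi_expand:
  assumes p0: "p > 0" and pf: "per p f"
  shows "Psi p f x h = (\<Sum>xi\<in>{0..<int p}. Cf p f xi h * ee p (xi * x))"
proof -
  define X where "X y = x + y\<^sup>2" for y
  define Y where "Y y = x + h + (y - h)\<^sup>2" for y
  define G where "G eta eta1 = (\<Sum>y\<in>{0..<int p}. fh p f eta1 * ee p (eta1 * X y) * (cnj (fh p f eta) * ee p (- (eta * Y y)))) / of_nat p" for eta eta1
  define T where "T eta eta1 y = fh p f eta1 * ee p (eta1 * X y) * (cnj (fh p f eta) * ee p (- (eta * Y y))) / of_nat p" for eta eta1 y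
  have perG: "per p (G eta)" for eta
    unfolding per_def
  proof
    fix eta1
    have e1: "\<And>z. ee p (eta1 * z) = ee p ((eta1 mod int p) * z)"
      by (rule ee_cong[OF p0]) (simp add: mod_mult_left_eq)
    have e2: "fh p f eta1 = fh p f (eta1 mod int p)" using per_fh[OF p0] unfolding per_def by blast
    show "G eta eta1 = G eta (eta1 mod int p)" unfolding G_def by (simp add: e1 e2)
  qed
  have "(\<Sum>xi\<in>{0..<int p}. Cf p f xi h * ee p (xi * x))
      = (\<Sum>xi\<in>{0..<int p}. \<Sum>eta\<in>{0..<int p}. G eta (xi + eta))"
  proof (intro sum.cong refl)
    fix xi
    show "Cf p f xi h * ee p (xi * x) = (\<Sum>eta\<in>{0..<int p}. G eta (xi + eta))"
      unfolding Cf_def sum_distrib_right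
    proof (intro sum.cong refl)
      fix eta
      have ex: "xi * y\<^sup>2 + 2 * (eta * h) * y + (- (eta * h) - eta * h\<^sup>2) + xi * x
          = (xi + eta) * X y + (- (eta * Y y))" for y
        unfolding X_def Y_def by (simp add: power2_eq_square algebra_simps)
      have "af p f xi eta * Wf p xi eta h * ee p (xi * x)
          = (\<Sum>y\<in>{0..<int p}. af p f xi eta * ee p (xi * y\<^sup>2 + 2 * (eta * h) * y + (- (eta * h) - eta * h\<^sup>2) + xi * x)) / of_nat p"
        unfolding Wf_def ee_add by (simp add: sum_distrib_left sum_distrib_right sum_divide_distrib mult_ac)
      also have "\<dots> = G eta (xi + eta)"
        unfolding ex G_def af_def ee_add by (simp add: mult_ac)
      finally show "af p f xi eta * Wf p xi eta h * ee p (xi * x) = G eta (xi + eta)" .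
    qed
  qed
  also have "\<dots> = (\<Sum>eta\<in>{0..<int p}. \<Sum>xi\<in>{0..<int p}. G eta (xi + eta))"
    by (rule sum.swap)
  also have "\<dots> = (\<Sum>eta\<in>{0..<int p}. \<Sum>eta1\<in>{0..<int p}. G eta eta1)"
    by (rule sum.cong[OF refl], rule sum_shift[OF p0 perG])
  also have "\<dots> = (\<Sum>eta\<in>{0..<int p}. \<Sum>eta1\<in>{0..<int p}. \<Sum>y\<in>{0..<int p}. T eta eta1 y)"
    unfolding G_def T_def sum_divide_distrib ..
  also have "\<dots> = (\<Sum>eta\<in>{0..<int p}. \<Sum>y\<in>{0..<int p}. \<Sum>eta1\<in>{0..<int p}. T eta eta1 y)"
    by (rule sum.cong[OF refl], rule sum.swap)
  also have "\<dots> = (\<Sum>y\<in>{0..<int p}. \<Sum>eta\<in>{0..<int p}. \<Sum>eta1\<in>{0..<int p}. T eta eta1 y)"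
    by (rule sum.swap)
  also have "\<dots> = (\<Sum>y\<in>{0..<int p}. \<Sum>eta1\<in>{0..<int p}. \<Sum>eta\<in>{0..<int p}. T eta eta1 y)"
    by (rule sum.cong[OF refl], rule sum.swap)
  also have "\<dots> = (\<Sum>y\<in>{0..<int p}. (\<Sum>eta1\<in>{0..<int p}. fh p f eta1 * ee p (eta1 * X y)) * cnj (\<Sum>eta\<in>{0..<int p}. fh p f eta * ee p (eta * Y y))) / of_nat p"
    unfolding T_def by (simp add: ee_cnj sum_product sum_divide_distrib mult_ac)
  also have "\<dots> = Psi p f x h"
    unfolding Psi_def X_def Y_def using fourier_inv[OF p0 pf] by simp
  finally show ?thesis ..
qed



lemma quad_form:
  fixes a :: "int \<Rightarrow> complex" and W :: "int \<Rightarrow> int \<Rightarrow> complex"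
  shows "(\<Sum>h\<in>A. (cmod (\<Sum>eta\<in>B. a eta * W eta h))\<^sup>2)
     \<le> (\<Sum>eta\<in>B. \<Sum>eta'\<in>B. cmod (a eta) * cmod (a eta') * cmod (\<Sum>h\<in>A. W eta h * cnj (W eta' h)))"
proof -
  have "complex_of_real (\<Sum>h\<in>A. (cmod (\<Sum>eta\<in>B. a eta * W eta h))\<^sup>2)
      = (\<Sum>h\<in>A. \<Sum>eta\<in>B. \<Sum>eta'\<in>B. a eta * cnj (a eta') * (W eta h * cnj (W eta' h)))"
    unfolding sum_norm_sq_c by (simp add: sum_product mult_ac)
  also have "\<dots> = (\<Sum>eta\<in>B. \<Sum>h\<in>A. \<Sum>eta'\<in>B. a eta * cnj (a eta') * (W eta h * cnj (W eta' h)))"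
    by (rule sum.swap)
  also have "\<dots> = (\<Sum>eta\<in>B. \<Sum>eta'\<in>B. \<Sum>h\<in>A. a eta * cnj (a eta') * (W eta h * cnj (W eta' h)))"
    by (rule sum.cong[OF refl], rule sum.swap)
  also have "\<dots> = (\<Sum>eta\<in>B. \<Sum>eta'\<in>B. a eta * cnj (a eta') * (\<Sum>h\<in>A. W eta h * cnj (W eta' h)))"
    by (simp add: sum_distrib_left)
  finally have eq: "complex_of_real (\<Sum>h\<in>A. (cmod (\<Sum>eta\<in>B. a eta * W eta h))\<^sup>2) = \<dots>" .
  have "(\<Sum>h\<in>A. (cmod (\<Sum>eta\<in>B. a eta * W eta h))\<^sup>2) = cmod (complex_of_real (\<Sum>h\<in>A. (cmod (\<Sum>eta\<in>B. a eta * W eta h))\<^sup>2))"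
  proof -
    have nn: "0 \<le> (\<Sum>h\<in>A. (cmod (\<Sum>eta\<in>B. a eta * W eta h))\<^sup>2)" by (simp add: sum_nonneg)
    show ?thesis by (simp only: norm_of_real abs_of_nonneg[OF nn])
  qed
  also have "\<dots> \<le> (\<Sum>eta\<in>B. cmod (\<Sum>eta'\<in>B. a eta * cnj (a eta') * (\<Sum>h\<in>A. W eta h * cnj (W eta' h))))"
    unfolding eq by (rule norm_sum)
  also have "\<dots> \<le> (\<Sum>eta\<in>B. \<Sum>eta'\<in>B. cmod (a eta * cnj (a eta') * (\<Sum>h\<in>A. W eta h * cnj (W eta' h))))"
    by (intro sum_mono norm_sum)
  also have "\<dots> = (\<Sum>eta\<in>B. \<Sum>eta'\<in>B. cmod (a eta) * cmod (a eta') * cmod (\<Sum>h\<in>A. W eta h * cnj (W eta' h)))"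
    by (simp add: norm_mult)
  finally show ?thesis .
qed

lemma norm_af: "cmod (af p f xi eta) = cmod (fh p f (xi + eta)) * cmod (fh p f eta)"
  unfolding af_def by (simp add: norm_mult)

lemma per_norm_fh: assumes "p > 0" shows "per p (\<lambda>eta. (cmod (fh p f eta))\<^sup>2)"
  using per_fh[OF assms] unfolding per_def by metis

lemma shift_N:
  assumes "p > 0"
  shows "(\<Sum>eta\<in>{0..<int p}. (cmod (fh p f (xi + eta)))\<^sup>2) = (\<Sum>eta\<in>{0..<int p}. (cmod (fh p f eta))\<^sup>2)"
  using sum_shift[OF assms per_norm_fh[OF assms], where a = xi] by (simp add: add.commute)

lemma CS_af:
  assumes "p > 0"
  shows "(\<Sum>eta\<in>{0..<int p}. cmod (af p f xi eta))\<^sup>2 \<le> (\<Sum>eta\<in>{0..<int p}. (cmod (fh p f eta))\<^sup>2)\<^sup>2"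
proof -
  have "(\<Sum>eta\<in>{0..<int p}. cmod (af p f xi eta))\<^sup>2
      = (\<Sum>eta\<in>{0..<int p}. cmod (fh p f (xi + eta)) * cmod (fh p f eta))\<^sup>2"
    unfolding norm_af ..
  also have "\<dots> \<le> (\<Sum>eta\<in>{0..<int p}. (cmod (fh p f (xi + eta)))\<^sup>2) * (\<Sum>eta\<in>{0..<int p}. (cmod (fh p f eta))\<^sup>2)"
    by (rule Cauchy_Schwarz_ineq_sum)
  also have "\<dots> = (\<Sum>eta\<in>{0..<int p}. (cmod (fh p f eta))\<^sup>2)\<^sup>2"
    unfolding shift_N[OF assms] by (simp add: power2_eq_square)
  finally show ?thesis .
qed

lemma sum_af_sq:
  assumes "p > 0"
  shows "(\<Sum>xi\<in>{0..<int p}. \<Sum>eta\<in>{0..<int p}. cmod (af p f xi eta) * cmod (af p f xi eta))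
       = (\<Sum>eta\<in>{0..<int p}. (cmod (fh p f eta))\<^sup>2)\<^sup>2"
proof -
  have "(\<Sum>xi\<in>{0..<int p}. \<Sum>eta\<in>{0..<int p}. cmod (af p f xi eta) * cmod (af p f xi eta))
      = (\<Sum>eta\<in>{0..<int p}. \<Sum>xi\<in>{0..<int p}. (cmod (fh p f (xi + eta)))\<^sup>2 * (cmod (fh p f eta))\<^sup>2)"
    unfolding norm_af by (subst sum.swap) (simp add: power2_eq_square mult_ac)
  also have "\<dots> = (\<Sum>eta\<in>{0..<int p}. (\<Sum>xi\<in>{0..<int p}. (cmod (fh p f xi))\<^sup>2) * (cmod (fh p f eta))\<^sup>2)"
  proof (intro sum.cong refl)
    fix eta
    have "(\<Sum>xi\<in>{0..<int p}. (cmod (fh p f (xi + eta)))\<^sup>2) = (\<Sum>xi\<in>{0..<int p}. (cmod (fh p f xi))\<^sup>2)"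
      by (rule sum_shift[OF assms per_norm_fh[OF assms]])
    then show "(\<Sum>xi\<in>{0..<int p}. (cmod (fh p f (xi + eta)))\<^sup>2 * (cmod (fh p f eta))\<^sup>2)
        = (\<Sum>xi\<in>{0..<int p}. (cmod (fh p f xi))\<^sup>2) * (cmod (fh p f eta))\<^sup>2"
      by (simp add: sum_distrib_right[symmetric])
  qed
  also have "\<dots> = (\<Sum>eta\<in>{0..<int p}. (cmod (fh p f eta))\<^sup>2)\<^sup>2"
    by (simp add: sum_distrib_left[symmetric] power2_eq_square)
  finally show ?thesis .
qed



lemma B_main:
  assumes pr: "prime p" and od: "odd p" and pf: "per p f" and mz: "(\<Sum>w\<in>{0..<int p}. f w) = 0"
  shows "(\<Sum>x\<in>{0..<int p}. \<Sum>h\<in>{0..<int p}. (cmod (Psi p f x h))\<^sup>2)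
       \<le> 3 * real p * sqrt (real p) * (\<Sum>eta\<in>{0..<int p}. (cmod (fh p f eta))\<^sup>2)\<^sup>2"
proof -
  have p0: "p > 0" using pr prime_gt_0_nat by blast
  define N where "N = (\<Sum>eta\<in>{0..<int p}. (cmod (fh p f eta))\<^sup>2)"
  define na where "na xi eta = cmod (af p f xi eta)" for xi eta
  define P where "P = {0..<int p}"
  have N0: "N \<ge> 0" unfolding N_def by (simp add: sum_nonneg)
  have sp: "sqrt (real p) > 0" using p0 by simp
  have S1: "(\<Sum>x\<in>P. \<Sum>h\<in>P. (cmod (Psi p f x h))\<^sup>2) = real p * (\<Sum>xi\<in>P. \<Sum>h\<in>P. (cmod (Cf p f xi h))\<^sup>2)"
  proof -
    have "(\<Sum>x\<in>P. \<Sum>h\<in>P. (cmod (Psi p f x h))\<^sup>2) = (\<Sum>h\<in>P. \<Sum>x\<in>P. (cmod (Psi p f x h))\<^sup>2)"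
      by (rule sum.swap)
    also have "\<dots> = (\<Sum>h\<in>P. real p * (\<Sum>xi\<in>P. (cmod (Cf p f xi h))\<^sup>2))"
      unfolding P_def psi_expand[OF p0 pf] by (intro sum.cong refl trig_parseval[OF p0])
    also have "\<dots> = real p * (\<Sum>xi\<in>P. \<Sum>h\<in>P. (cmod (Cf p f xi h))\<^sup>2)"
    proof -
      have "(\<Sum>h\<in>P. real p * (\<Sum>xi\<in>P. (cmod (Cf p f xi h))\<^sup>2)) = real p * (\<Sum>h\<in>P. \<Sum>xi\<in>P. (cmod (Cf p f xi h))\<^sup>2)"
        by (simp only: sum_distrib_left)
      also have "(\<Sum>h\<in>P. \<Sum>xi\<in>P. (cmod (Cf p f xi h))\<^sup>2) = (\<Sum>xi\<in>P. \<Sum>h\<in>P. (cmod (Cf p f xi h))\<^sup>2)"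
        by (rule sum.swap)
      finally show ?thesis .
    qed
    finally show ?thesis .
  qed
  have S2: "(\<Sum>h\<in>P. (cmod (Cf p f xi h))\<^sup>2) \<le> (\<Sum>eta\<in>P. \<Sum>eta'\<in>P. na xi eta * na xi eta' * cmod (Kf p xi eta eta'))" for xi
    unfolding Cf_def Kf_def na_def P_def by (rule quad_form)
  define bt where "bt xi eta eta' = na xi eta * na xi eta' / sqrt (real p) + (if xi = 0 then na xi eta * na xi eta' else 0)
     + (if eta = eta' then na xi eta * na xi eta' else 0)" for xi eta eta'
  have nan: "na xi eta \<ge> 0" for xi eta unfolding na_def by simp
  have S3: "na xi eta * na xi eta' * cmod (Kf p xi eta eta') \<le> bt xi eta eta'"
    if xi: "xi \<in> P" and eta: "eta \<in> P" and eta': "eta' \<in> P" for xi eta eta'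
  proof -
    have b1: "0 \<le> na xi eta * na xi eta' / sqrt (real p)" using nan sp by simp
    have b2: "0 \<le> (if xi = 0 then na xi eta * na xi eta' else 0)" using nan by simp
    have b3: "0 \<le> (if eta = eta' then na xi eta * na xi eta' else 0)" using nan by simp
    have L0: "0 \<le> na xi eta * na xi eta'" using nan by simp
    show ?thesis
    proof (cases "xi = 0")
      case True
      show ?thesis
      proof (cases "eta = 0")
        case True
        have "fh p f 0 = 0" unfolding fh_0 mz by simp
        then have "na xi eta = 0" unfolding na_def af_def using \<open>xi = 0\<close> True by simp
        then show ?thesis using b1 b2 b3 unfolding bt_def by simp
      next
        case False
        have "\<not> int p dvd eta" using dvd_P[of eta p 0] eta False unfolding P_def by auto
        then have "cmod (Kf p 0 eta eta') \<le> 1" by (rule Kf_xi0_le1[OF pr od])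
        then have "na xi eta * na xi eta' * cmod (Kf p xi eta eta') \<le> na xi eta * na xi eta' * 1"
          using L0 \<open>xi = 0\<close> by (intro mult_left_mono) auto
        then show ?thesis using b1 b3 \<open>xi = 0\<close> unfolding bt_def by simp
      qed
    next
      case False
      have nx: "\<not> int p dvd xi" using dvd_P[of xi p 0] xi False unfolding P_def by auto
      have xi0: "xi \<noteq> 0" using False .
      show ?thesis
      proof (cases "eta = eta'")
        case True
        have "cmod (Kf p xi eta eta') \<le> 1" by (rule Kf_le1[OF pr od nx])
        then have "na xi eta * na xi eta' * cmod (Kf p xi eta eta') \<le> na xi eta * na xi eta' * 1"
          using L0 by (intro mult_left_mono) auto
        moreover have "bt xi eta eta' = na xi eta * na xi eta' / sqrt (real p) + na xi eta * na xi eta'"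
          unfolding bt_def using xi0 True by simp
        ultimately show ?thesis using b1 by linarith
      next
        case False
        have "cmod (Kf p xi eta eta') \<le> 1 / sqrt (real p)"
          by (rule Kf_small[OF pr od nx]) (use eta eta' False P_def in auto)
        then have "na xi eta * na xi eta' * cmod (Kf p xi eta eta') \<le> na xi eta * na xi eta' * (1 / sqrt (real p))"
          using L0 by (intro mult_left_mono) auto
        then show ?thesis using b2 b3 False unfolding bt_def by simp
      qed
    qed
  qed
  have CS: "(\<Sum>eta\<in>P. na xi eta)\<^sup>2 \<le> N\<^sup>2" for xi
    unfolding na_def N_def P_def by (rule CS_af[OF p0])
  have prodsq: "(\<Sum>eta\<in>P. \<Sum>eta'\<in>P. na xi eta * na xi eta') = (\<Sum>eta\<in>P. na xi eta)\<^sup>2" for xi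
    by (simp add: power2_eq_square sum_product)
  have T1: "(\<Sum>xi\<in>P. \<Sum>eta\<in>P. \<Sum>eta'\<in>P. na xi eta * na xi eta' / sqrt (real p)) \<le> sqrt (real p) * N\<^sup>2"
  proof -
    have "(\<Sum>xi\<in>P. \<Sum>eta\<in>P. \<Sum>eta'\<in>P. na xi eta * na xi eta' / sqrt (real p))
        = (\<Sum>xi\<in>P. (\<Sum>eta\<in>P. na xi eta)\<^sup>2 / sqrt (real p))"
      by (simp add: sum_divide_distrib[symmetric] prodsq)
    also have "\<dots> \<le> (\<Sum>xi\<in>P. N\<^sup>2 / sqrt (real p))"
      by (intro sum_mono divide_right_mono CS) (use sp in auto)
    also have "\<dots> = real p * N\<^sup>2 / sqrt (real p)" unfolding P_def by simp
    also have "\<dots> = sqrt (real p) * N\<^sup>2"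
      by (metis real_div_sqrt of_nat_0_le_iff times_divide_eq_left)
    finally show ?thesis .
  qed
  have T2: "(\<Sum>xi\<in>P. \<Sum>eta\<in>P. \<Sum>eta'\<in>P. (if xi = 0 then na xi eta * na xi eta' else 0)) \<le> N\<^sup>2"
  proof -
    have "(\<Sum>xi\<in>P. \<Sum>eta\<in>P. \<Sum>eta'\<in>P. (if xi = 0 then na xi eta * na xi eta' else 0))
        = (\<Sum>xi\<in>P. (if xi = 0 then (\<Sum>eta\<in>P. \<Sum>eta'\<in>P. na xi eta * na xi eta') else 0))"
      by (intro sum.cong refl) auto
    also have "\<dots> = (\<Sum>eta\<in>P. \<Sum>eta'\<in>P. na 0 eta * na 0 eta')"
      using p0 unfolding P_def by (simp add: sum.delta')
    also have "\<dots> \<le> N\<^sup>2" unfolding prodsq by (rule CS)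
    finally show ?thesis .
  qed
  have T3: "(\<Sum>xi\<in>P. \<Sum>eta\<in>P. \<Sum>eta'\<in>P. (if eta = eta' then na xi eta * na xi eta' else 0)) = N\<^sup>2"
  proof -
    have "(\<Sum>xi\<in>P. \<Sum>eta\<in>P. \<Sum>eta'\<in>P. (if eta = eta' then na xi eta * na xi eta' else 0))
        = (\<Sum>xi\<in>P. \<Sum>eta\<in>P. na xi eta * na xi eta)"
      unfolding P_def by (intro sum.cong refl) (simp add: sum.delta)
    also have "\<dots> = N\<^sup>2" unfolding na_def N_def P_def by (rule sum_af_sq[OF p0])
    finally show ?thesis .
  qed
  have "(\<Sum>xi\<in>P. \<Sum>h\<in>P. (cmod (Cf p f xi h))\<^sup>2) \<le> (\<Sum>xi\<in>P. \<Sum>eta\<in>P. \<Sum>eta'\<in>P. bt xi eta eta')"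
  proof (rule sum_mono)
    fix xi assume xi: "xi \<in> P"
    have "(\<Sum>h\<in>P. (cmod (Cf p f xi h))\<^sup>2) \<le> (\<Sum>eta\<in>P. \<Sum>eta'\<in>P. na xi eta * na xi eta' * cmod (Kf p xi eta eta'))"
      by (rule S2)
    also have "\<dots> \<le> (\<Sum>eta\<in>P. \<Sum>eta'\<in>P. bt xi eta eta')"
      by (intro sum_mono S3 xi) auto
    finally show "(\<Sum>h\<in>P. (cmod (Cf p f xi h))\<^sup>2) \<le> (\<Sum>eta\<in>P. \<Sum>eta'\<in>P. bt xi eta eta')" .
  qed
  also have "\<dots> = (\<Sum>xi\<in>P. \<Sum>eta\<in>P. \<Sum>eta'\<in>P. na xi eta * na xi eta' / sqrt (real p))
      + (\<Sum>xi\<in>P. \<Sum>eta\<in>P. \<Sum>eta'\<in>P. (if xi = 0 then na xi eta * na xi eta' else 0))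
      + (\<Sum>xi\<in>P. \<Sum>eta\<in>P. \<Sum>eta'\<in>P. (if eta = eta' then na xi eta * na xi eta' else 0))"
    unfolding bt_def by (simp only: sum.distrib)
  also have "\<dots> \<le> sqrt (real p) * N\<^sup>2 + N\<^sup>2 + N\<^sup>2"
    using T1 T2 T3 by linarith
  also have "\<dots> \<le> 3 * sqrt (real p) * N\<^sup>2"
  proof -
    have "1 \<le> sqrt (real p)" using p0 by simp
    then have "N\<^sup>2 \<le> sqrt (real p) * N\<^sup>2" using N0 by (simp add: mult_le_cancel_right1)
    then show ?thesis by linarith
  qed
  finally have "(\<Sum>xi\<in>P. \<Sum>h\<in>P. (cmod (Cf p f xi h))\<^sup>2) \<le> 3 * sqrt (real p) * N\<^sup>2" .
  then have "real p * (\<Sum>xi\<in>P. \<Sum>h\<in>P. (cmod (Cf p f xi h))\<^sup>2) \<le> real p * (3 * sqrt (real p) * N\<^sup>2)"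
    by (intro mult_left_mono) auto
  then have "(\<Sum>x\<in>P. \<Sum>h\<in>P. (cmod (Psi p f x h))\<^sup>2) \<le> 3 * real p * sqrt (real p) * N\<^sup>2"
    unfolding S1 by (simp add: mult_ac)
  then show ?thesis unfolding N_def P_def .
qed



lemma per_compI:
  assumes "per p g" "\<And>x. q x mod int p = q (x mod int p) mod int p"
  shows "per p (\<lambda>x. g (q x))"
  unfolding per_def using assms per_cong by metis

lemma per_mult: "per p a \<Longrightarrow> per p b \<Longrightarrow> per p (\<lambda>x. a x * b x)"
  unfolding per_def by metis

lemma per_cnj: "per p a \<Longrightarrow> per p (\<lambda>x. cnj (a x))"
  unfolding per_def by metis

lemma per_divc: "per p a \<Longrightarrow> per p (\<lambda>x. a x / c)"
  unfolding per_def by metis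

lemma per_sum: "(\<And>y. per p (\<lambda>x. G x y)) \<Longrightarrow> per p (\<lambda>x. \<Sum>y\<in>A. G x y)"
  unfolding per_def by (intro allI sum.cong refl) blast

lemma per_normsq: "per p a \<Longrightarrow> per p (\<lambda>x. (cmod (a x))\<^sup>2)"
  unfolding per_def by metis

lemma md_pow: "a mod (m::int) = b mod m \<Longrightarrow> a ^ n mod m = b ^ n mod m"
  by (metis power_mod)

lemma md_var: "(x::int) mod m = (x mod m) mod m" by simp

lemmas md_rules = mod_add_cong mod_diff_cong mod_mult_cong md_pow md_var refl

lemma CS_c:
  fixes a b :: "'i \<Rightarrow> complex"
  shows "(cmod (\<Sum>i\<in>I. a i * b i))\<^sup>2 \<le> (\<Sum>i\<in>I. (cmod (a i))\<^sup>2) * (\<Sum>i\<in>I. (cmod (b i))\<^sup>2)"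
proof -
  have "cmod (\<Sum>i\<in>I. a i * b i) \<le> (\<Sum>i\<in>I. cmod (a i) * cmod (b i))"
    by (metis (no_types, lifting) norm_mult norm_sum sum.cong)
  then have "(cmod (\<Sum>i\<in>I. a i * b i))\<^sup>2 \<le> (\<Sum>i\<in>I. cmod (a i) * cmod (b i))\<^sup>2"
    by (intro power_mono) auto
  also have "\<dots> \<le> (\<Sum>i\<in>I. (cmod (a i))\<^sup>2) * (\<Sum>i\<in>I. (cmod (b i))\<^sup>2)"
    by (rule Cauchy_Schwarz_ineq_sum)
  finally show ?thesis .
qed

lemma CS_c2:
  fixes a b :: "'i \<Rightarrow> 'j \<Rightarrow> complex"
  assumes "finite I" "finite J"
  shows "(cmod (\<Sum>i\<in>I. \<Sum>j\<in>J. a i j * b i j))\<^sup>2 \<le> (\<Sum>i\<in>I. \<Sum>j\<in>J. (cmod (a i j))\<^sup>2) * (\<Sum>i\<in>I. \<Sum>j\<in>J. (cmod (b i j))\<^sup>2)"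
proof -
  have e: "(\<Sum>i\<in>I. \<Sum>j\<in>J. g i j) = (\<Sum>z\<in>I \<times> J. g (fst z) (snd z))" for g :: "'i \<Rightarrow> 'j \<Rightarrow> 'c::comm_monoid_add"
    by (simp add: sum.cartesian_product case_prod_beta)
  show ?thesis unfolding e by (rule CS_c)
qed

definition Fc :: "nat \<Rightarrow> (int \<Rightarrow> complex) \<Rightarrow> (int \<Rightarrow> complex) \<Rightarrow> int \<Rightarrow> complex" where
  "Fc p g1 g2 x = (\<Sum>y\<in>{0..<int p}. g1 (x + y) * g2 (x + y\<^sup>2)) / of_nat p"

lemma per_Fc: assumes "per p g1" "per p g2" shows "per p (Fc p g1 g2)"
  unfolding Fc_def
  by (intro per_divc per_sum per_mult per_compI[OF assms(1)] per_compI[OF assms(2)]; intro md_rules)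



lemma per_const: "per p (\<lambda>x. c)"
  unfolding per_def by simp

lemma step2a:
  assumes p0: "p > 0" and pg1: "per p g1" and pg2: "per p g2"
  shows "(\<Sum>x\<in>{0..<int p}. (cmod (Fc p g1 g2 x))\<^sup>2)\<^sup>2
       \<le> (\<Sum>u\<in>{0..<int p}. (cmod (g1 u))\<^sup>2)\<^sup>2 * (\<Sum>x\<in>{0..<int p}. \<Sum>h\<in>{0..<int p}. (cmod (Psi p g2 x h))\<^sup>2) / (real p)\<^sup>2"
proof -
  define P where "P = {0..<int p}"
  define F where "F = Fc p g1 g2"
  have pF: "per p F" unfolding F_def by (rule per_Fc[OF pg1 pg2])
  define A where "A = (\<Sum>x\<in>P. (cmod (F x))\<^sup>2)"
  define N1 where "N1 = (\<Sum>u\<in>P. (cmod (g1 u))\<^sup>2)"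
  define BB where "BB = (\<Sum>x\<in>P. \<Sum>h\<in>P. (cmod (Psi p g2 x h))\<^sup>2)"
  define Phi where "Phi u = (\<Sum>y\<in>P. cnj (F (u - y)) * g2 (u - y + y\<^sup>2)) / of_nat p" for u
  have A0: "A \<ge> 0" unfolding A_def by (simp add: sum_nonneg)
  have N10: "N1 \<ge> 0" unfolding N1_def by (simp add: sum_nonneg)
  have BB0: "BB \<ge> 0" unfolding BB_def by (simp add: sum_nonneg)
  have E1: "complex_of_real A = (\<Sum>u\<in>P. g1 u * Phi u)"
  proof -
    have "complex_of_real A = (\<Sum>x\<in>P. cnj (F x) * F x)"
      unfolding A_def sum_norm_sq_c by (simp add: mult.commute)
    also have "\<dots> = (\<Sum>x\<in>P. \<Sum>y\<in>P. cnj (F x) * g1 (x + y) * g2 (x + y\<^sup>2) / of_nat p)"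
      unfolding F_def Fc_def P_def by (simp add: sum_distrib_left sum_divide_distrib mult.assoc)
    also have "\<dots> = (\<Sum>y\<in>P. \<Sum>x\<in>P. cnj (F x) * g1 (x + y) * g2 (x + y\<^sup>2) / of_nat p)"
      by (rule sum.swap)
    also have "\<dots> = (\<Sum>y\<in>P. \<Sum>u\<in>P. cnj (F (u - y)) * g1 u * g2 (u - y + y\<^sup>2) / of_nat p)"
    proof (rule sum.cong[OF refl])
      fix y
      have ph: "per p (\<lambda>x. cnj (F x) * g1 (x + y) * g2 (x + y\<^sup>2) / of_nat p)"
        by (intro per_divc per_mult per_cnj pF per_compI[OF pg1] per_compI[OF pg2]; intro md_rules)
      show "(\<Sum>x\<in>P. cnj (F x) * g1 (x + y) * g2 (x + y\<^sup>2) / of_nat p) = (\<Sum>u\<in>P. cnj (F (u - y)) * g1 u * g2 (u - y + y\<^sup>2) / of_nat p)"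
        using sum_shift[OF p0 ph, where a = "- y"] unfolding P_def by (simp add: algebra_simps)
    qed
    also have "\<dots> = (\<Sum>u\<in>P. \<Sum>y\<in>P. cnj (F (u - y)) * g1 u * g2 (u - y + y\<^sup>2) / of_nat p)"
      by (rule sum.swap)
    also have "\<dots> = (\<Sum>u\<in>P. g1 u * Phi u)"
      unfolding Phi_def by (simp add: sum_distrib_left sum_divide_distrib mult_ac)
    finally show ?thesis .
  qed
  define Q where "Q = (\<Sum>u\<in>P. (cmod (Phi u))\<^sup>2)"
  have Q0: "Q \<ge> 0" unfolding Q_def by (simp add: sum_nonneg)
  have E2: "A\<^sup>2 \<le> N1 * Q"
  proof -
    have "A\<^sup>2 = (cmod (complex_of_real A))\<^sup>2" using A0 by simp
    also have "\<dots> \<le> N1 * Q" unfolding E1 N1_def Q_def by (rule CS_c)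
    finally show ?thesis .
  qed
  define T where "T u y y' = cnj (F (u - y)) * g2 (u - y + y\<^sup>2) * (F (u - y') * cnj (g2 (u - y' + y'\<^sup>2))) / (of_nat p * of_nat p)" for u y y'
  have E3: "complex_of_real Q = (\<Sum>x\<in>P. \<Sum>h\<in>P. cnj (F x) * F (x + h) * Psi p g2 x h) / of_nat p"
  proof -
    have "complex_of_real Q = (\<Sum>u\<in>P. Phi u * cnj (Phi u))"
      unfolding Q_def sum_norm_sq_c ..
    also have "\<dots> = (\<Sum>u\<in>P. \<Sum>y'\<in>P. \<Sum>y\<in>P. T u y y')"
      unfolding Phi_def T_def by (simp add: sum_product sum_divide_distrib mult_ac)
    also have "\<dots> = (\<Sum>u\<in>P. \<Sum>y\<in>P. \<Sum>y'\<in>P. T u y y')"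
      by (rule sum.cong[OF refl], rule sum.swap)
    also have "\<dots> = (\<Sum>y\<in>P. \<Sum>u\<in>P. \<Sum>y'\<in>P. T u y y')"
      by (rule sum.swap)
    also have "\<dots> = (\<Sum>y\<in>P. \<Sum>x\<in>P. \<Sum>y'\<in>P. T (x + y) y y')"
    proof (rule sum.cong[OF refl])
      fix y
      have ph: "per p (\<lambda>u. \<Sum>y'\<in>P. T u y y')"
        unfolding T_def
        by (intro per_sum per_divc per_mult per_cnj per_compI[OF pF] per_compI[OF pg2]; intro md_rules)
      show "(\<Sum>u\<in>P. \<Sum>y'\<in>P. T u y y') = (\<Sum>x\<in>P. \<Sum>y'\<in>P. T (x + y) y y')"
        using sum_shift[OF p0 ph, where a = y] unfolding P_def by simp
    qed
    also have "\<dots> = (\<Sum>y\<in>P. \<Sum>x\<in>P. \<Sum>h\<in>P. T (x + y) y (y - h))"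
    proof (rule sum.cong[OF refl], rule sum.cong[OF refl])
      fix y x
      have ph: "per p (\<lambda>y'. T (x + y) y y')"
        unfolding T_def
        by (intro per_divc per_mult per_cnj per_compI[OF pF] per_compI[OF pg2] per_const; intro md_rules)
      show "(\<Sum>y'\<in>P. T (x + y) y y') = (\<Sum>h\<in>P. T (x + y) y (y - h))"
        using sum_refl[OF p0 ph, where a = y] unfolding P_def by simp
    qed
    also have "\<dots> = (\<Sum>y\<in>P. \<Sum>x\<in>P. \<Sum>h\<in>P. cnj (F x) * F (x + h) * (g2 (x + y\<^sup>2) * cnj (g2 (x + h + (y - h)\<^sup>2))) / (of_nat p * of_nat p))"
    proof (intro sum.cong refl)
      fix y x h
      have a1: "(x::int) + y - y = x" and a2: "x + y - y + y\<^sup>2 = x + y\<^sup>2" and a3: "x + y - (y - h) = x + h"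
        and a4: "x + y - (y - h) + (y - h)\<^sup>2 = x + h + (y - h)\<^sup>2" by (simp_all add: algebra_simps)
      show "T (x + y) y (y - h) = cnj (F x) * F (x + h) * (g2 (x + y\<^sup>2) * cnj (g2 (x + h + (y - h)\<^sup>2))) / (of_nat p * of_nat p)"
        unfolding T_def a1 a2 a3 a4 by (simp add: mult_ac)
    qed
    also have "\<dots> = (\<Sum>x\<in>P. \<Sum>y\<in>P. \<Sum>h\<in>P. cnj (F x) * F (x + h) * (g2 (x + y\<^sup>2) * cnj (g2 (x + h + (y - h)\<^sup>2))) / (of_nat p * of_nat p))"
      by (rule sum.swap)
    also have "\<dots> = (\<Sum>x\<in>P. \<Sum>h\<in>P. \<Sum>y\<in>P. cnj (F x) * F (x + h) * (g2 (x + y\<^sup>2) * cnj (g2 (x + h + (y - h)\<^sup>2))) / (of_nat p * of_nat p))"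
      by (rule sum.cong[OF refl], rule sum.swap)
    also have "\<dots> = (\<Sum>x\<in>P. \<Sum>h\<in>P. cnj (F x) * F (x + h) * Psi p g2 x h) / of_nat p"
      unfolding Psi_def P_def by (simp add: sum_distrib_left sum_divide_distrib mult_ac)
    finally show ?thesis .
  qed
  have E4: "Q\<^sup>2 \<le> A\<^sup>2 * BB / (real p)\<^sup>2"
  proof -
    have "Q = cmod (complex_of_real Q)" using Q0 by simp
    also have "\<dots> = cmod (\<Sum>x\<in>P. \<Sum>h\<in>P. cnj (F x) * F (x + h) * Psi p g2 x h) / real p"
      unfolding E3 by (simp add: norm_divide)
    finally have Qe: "Q\<^sup>2 = (cmod (\<Sum>x\<in>P. \<Sum>h\<in>P. cnj (F x) * F (x + h) * Psi p g2 x h))\<^sup>2 / (real p)\<^sup>2"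
      by (simp add: power_divide)
    have "(cmod (\<Sum>x\<in>P. \<Sum>h\<in>P. cnj (F x) * F (x + h) * Psi p g2 x h))\<^sup>2
        \<le> (\<Sum>x\<in>P. \<Sum>h\<in>P. (cmod (cnj (F x) * F (x + h)))\<^sup>2) * BB"
      unfolding BB_def P_def by (rule CS_c2) auto
    also have "(\<Sum>x\<in>P. \<Sum>h\<in>P. (cmod (cnj (F x) * F (x + h)))\<^sup>2) = A\<^sup>2"
    proof -
      have "(\<Sum>x\<in>P. \<Sum>h\<in>P. (cmod (cnj (F x) * F (x + h)))\<^sup>2) = (\<Sum>x\<in>P. (cmod (F x))\<^sup>2 * (\<Sum>h\<in>P. (cmod (F (h + x)))\<^sup>2))"
        by (simp add: norm_mult power_mult_distrib sum_distrib_left add.commute)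
      also have "\<dots> = (\<Sum>x\<in>P. (cmod (F x))\<^sup>2 * A)"
        unfolding A_def P_def using sum_shift[OF p0 per_normsq[OF pF]] by simp
      also have "\<dots> = A\<^sup>2" unfolding A_def by (simp add: sum_distrib_right power2_eq_square)
      finally show ?thesis .
    qed
    finally have "(cmod (\<Sum>x\<in>P. \<Sum>h\<in>P. cnj (F x) * F (x + h) * Psi p g2 x h))\<^sup>2 \<le> A\<^sup>2 * BB" .
    then show ?thesis unfolding Qe by (intro divide_right_mono) auto
  qed
  have E5: "A\<^sup>2 \<le> N1\<^sup>2 * BB / (real p)\<^sup>2"
  proof (cases "A = 0")
    case True
    then show ?thesis using BB0 by simp
  next
    case False
    then have Apos: "A\<^sup>2 > 0" using A0 by simp
    have "(A\<^sup>2)\<^sup>2 \<le> (N1 * Q)\<^sup>2"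
      using E2 by (intro power_mono) auto
    also have "\<dots> = N1\<^sup>2 * Q\<^sup>2" by (simp add: power_mult_distrib)
    also have "\<dots> \<le> N1\<^sup>2 * (A\<^sup>2 * BB / (real p)\<^sup>2)"
      using E4 by (intro mult_left_mono) auto
    finally have "A\<^sup>2 * A\<^sup>2 \<le> A\<^sup>2 * (N1\<^sup>2 * BB / (real p)\<^sup>2)"
      by (simp add: power2_eq_square mult_ac)
    then show ?thesis using mult_le_cancel_left_pos[OF Apos] by blast
  qed
  then show ?thesis unfolding A_def N1_def BB_def F_def P_def .
qed



lemma L: fixes a n t s :: real
  assumes "a \<ge> 0" "n \<ge> 0" "t \<ge> 0" "s \<le> t * t" "a\<^sup>2 \<le> 3 * n\<^sup>2 * s"
  shows "a \<le> 4 * t * n"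
proof -
  have "3 * n\<^sup>2 * s \<le> 3 * n\<^sup>2 * (t * t)" using assms(4) by (intro mult_left_mono) auto
  also have "\<dots> \<le> (4 * t * n)\<^sup>2"
  proof -
    have e: "(4 * t * n)\<^sup>2 = 16 * (n\<^sup>2 * (t * t))" by (simp add: power2_eq_square)
    have e2: "3 * n\<^sup>2 * (t * t) = 3 * (n\<^sup>2 * (t * t))" by (simp only: mult.assoc)
    have "0 \<le> n\<^sup>2 * (t * t)" by simp
    then show ?thesis unfolding e e2 by linarith
  qed
  finally have "a\<^sup>2 \<le> (4 * t * n)\<^sup>2" using assms(5) by linarith
  moreover have "0 \<le> 4 * t * n" using assms(2,3) by simp
  ultimately show ?thesis by (rule power2_le_imp_le)
qed

lemma sq5: assumes r0: "r > 0" shows "sqrt (r powr (-1/5)) = r powr (-1/10)"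
  proof -
    have "sqrt (r powr (-1/5)) = (r powr (-1/5)) powr (1/2)"
      using r0 by (simp add: powr_half_sqrt)
    also have "\<dots> = r powr (-1/10)" by (simp add: powr_powr)
    finally show ?thesis .
  qed

lemma q: assumes r2: "(r::real) \<ge> 2" shows "1 / sqrt r \<le> r powr (-1/5) * r powr (-1/5)"
proof -
    have r0: "r > 0" using r2 by simp
    have s: "1 / sqrt r = r powr (-1/2)"
      using r0 by (simp add: powr_minus_divide powr_half_sqrt)
    have "r powr (-1/2) \<le> r powr (-2/5)" using r2 by (intro powr_mono) auto
    also have "r powr (-2/5) = r powr (-1/5) * r powr (-1/5)"
      by (simp add: powr_add[symmetric])
    finally show ?thesis using s by simp
qed

lemma half: "1 \<le> 2 * (2::real) powr (-1/10)"
proof -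
    have "2 powr (-1) \<le> (2::real) powr (-1/10)" by (intro powr_mono) auto
    then show ?thesis by (simp add: powr_minus_divide)
qed

lemma final_real:
  fixes a n1 n2 r :: real
  assumes a0: "a \<ge> 0" and n10: "n1 \<ge> 0" and n20: "n2 \<ge> 0" and r2: "r \<ge> 2"
    and H: "a\<^sup>2 \<le> 3 * (n1 * n2)\<^sup>2 * (1 / sqrt r) \<or> (r = 2 \<and> a \<le> n1 * n2)"
  shows "sqrt a \<le> 2 * r powr (-1/10) * sqrt n1 * sqrt n2"
  using H
proof
  assume h: "a\<^sup>2 \<le> 3 * (n1 * n2)\<^sup>2 * (1 / sqrt r)"
  have r0: "r > 0" using r2 by simp
  have "a \<le> 4 * r powr (-1/5) * (n1 * n2)"
    by (rule L[OF a0 _ _ q[OF r2] h]) (use n10 n20 in auto)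
  then have "sqrt a \<le> sqrt (4 * r powr (-1/5) * (n1 * n2))" by (rule real_sqrt_le_mono)
  also have "\<dots> = 2 * sqrt (r powr (-1/5)) * (sqrt n1 * sqrt n2)"
    by (simp only: real_sqrt_mult real_sqrt_four)
  also have "\<dots> = 2 * r powr (-1/10) * sqrt n1 * sqrt n2"
    by (simp only: sq5[OF r0] mult.assoc)
  finally show ?thesis .
next
  assume h: "r = 2 \<and> a \<le> n1 * n2"
  have hf: "1 \<le> 2 * r powr (-1/10)" using h half by simp
  have "sqrt a \<le> sqrt (n1 * n2)" using h by simp
  also have "\<dots> = 1 * (sqrt n1 * sqrt n2)" by (simp add: real_sqrt_mult)
  also have "\<dots> \<le> 2 * r powr (-1/10) * (sqrt n1 * sqrt n2)"
    using hf n10 n20 by (intro mult_right_mono) auto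
  finally show ?thesis by (simp only: mult.assoc)
qed



lemma Fc_centered:
  assumes p0: "p > 0" and pg1: "per p g1"
  shows "Fc p g1 (\<lambda>w. g2 w - m) x = Fc p g1 g2 x - m * ((\<Sum>u\<in>{0..<int p}. g1 u) / of_nat p)"
proof -
  have sh: "(\<Sum>y\<in>{0..<int p}. g1 (x + y)) = (\<Sum>u\<in>{0..<int p}. g1 u)"
    using sum_shift[OF p0 pg1, where a = x] by (simp add: add.commute)
  have "Fc p g1 (\<lambda>w. g2 w - m) x = (\<Sum>y\<in>{0..<int p}. g1 (x + y) * g2 (x + y\<^sup>2) - m * g1 (x + y)) / of_nat p"
    unfolding Fc_def by (simp add: algebra_simps)
  also have "\<dots> = Fc p g1 g2 x - m * (\<Sum>y\<in>{0..<int p}. g1 (x + y)) / of_nat p"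
    unfolding Fc_def by (simp add: sum_subtractf sum_distrib_left diff_divide_distrib)
  finally show ?thesis unfolding sh by simp
qed

lemma centered_sum:
  fixes g :: "int \<Rightarrow> complex"
  assumes p0: "p > 0"
  shows "(\<Sum>w\<in>{0..<int p}. g w - (\<Sum>u\<in>{0..<int p}. g u) / of_nat p) = 0"
proof -
  have "(\<Sum>w\<in>{0..<int p}. g w - (\<Sum>u\<in>{0..<int p}. g u) / of_nat p)
      = (\<Sum>w\<in>{0..<int p}. g w) - of_nat p * ((\<Sum>u\<in>{0..<int p}. g u) / of_nat p)"
    by (simp add: sum_subtractf sum_constant)
  also have "\<dots> = 0" using p0 by simp
  finally show ?thesis .
qed

lemma centered_norm:
  fixes g :: "int \<Rightarrow> complex"
  assumes p0: "p > 0"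
  shows "(\<Sum>w\<in>{0..<int p}. (cmod (g w - (\<Sum>u\<in>{0..<int p}. g u) / of_nat p))\<^sup>2) \<le> (\<Sum>w\<in>{0..<int p}. (cmod (g w))\<^sup>2)"
proof -
  define P where "P = {0..<int p}"
  define m where "m = (\<Sum>u\<in>P. g u) / of_nat p"
  have Sg: "(\<Sum>u\<in>P. g u) = of_nat p * m" unfolding m_def using p0 by simp
  have cP: "card P = p" unfolding P_def by simp
  have "complex_of_real (\<Sum>w\<in>P. (cmod (g w - m))\<^sup>2) = (\<Sum>w\<in>P. (g w - m) * cnj (g w - m))"
    by (rule sum_norm_sq_c)
  also have "\<dots> = (\<Sum>w\<in>P. g w * cnj (g w)) - cnj m * (\<Sum>w\<in>P. g w) - m * cnj (\<Sum>w\<in>P. g w) + of_nat p * (m * cnj m)"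
    by (simp add: algebra_simps sum_subtractf sum.distrib sum_distrib_left cP)
  also have "\<dots> = (\<Sum>w\<in>P. g w * cnj (g w)) - of_nat p * (m * cnj m)"
    unfolding Sg by (simp add: algebra_simps)
  also have "\<dots> = complex_of_real ((\<Sum>w\<in>P. (cmod (g w))\<^sup>2) - real p * (cmod m)\<^sup>2)"
    unfolding of_real_diff of_real_mult sum_norm_sq_c complex_norm_square by simp
  finally have "(\<Sum>w\<in>P. (cmod (g w - m))\<^sup>2) = (\<Sum>w\<in>P. (cmod (g w))\<^sup>2) - real p * (cmod m)\<^sup>2"
    using of_real_eq_iff by blast
  moreover have "0 \<le> real p * (cmod m)\<^sup>2" by simp
  ultimately show ?thesis unfolding P_def m_def by linarith
qed



lemma odd_alg:
  fixes A N1 BB r n2 :: real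
  assumes r0: "r > 0" and h1: "A\<^sup>2 \<le> N1\<^sup>2 * BB / r\<^sup>2" and h2: "BB \<le> 3 * r * sqrt r * n2\<^sup>2"
  shows "(A / r)\<^sup>2 \<le> 3 * (N1 / r * n2)\<^sup>2 * (1 / sqrt r)"
proof -
  define s where "s = sqrt r"
  have s0: "s > 0" unfolding s_def using r0 by simp
  have rs: "r = s * s" unfolding s_def using r0 by simp
  have "N1\<^sup>2 * BB / r\<^sup>2 \<le> N1\<^sup>2 * (3 * r * sqrt r * n2\<^sup>2) / r\<^sup>2"
    using h2 by (intro divide_right_mono mult_left_mono) auto
  with h1 have h3: "A\<^sup>2 \<le> N1\<^sup>2 * (3 * r * s * n2\<^sup>2) / r\<^sup>2" unfolding s_def by linarith
  have "(A / r)\<^sup>2 = A\<^sup>2 / r\<^sup>2" by (simp add: power_divide)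
  also have "\<dots> \<le> N1\<^sup>2 * (3 * r * s * n2\<^sup>2) / r\<^sup>2 / r\<^sup>2"
    using h3 by (intro divide_right_mono) auto
  also have "\<dots> = 3 * (N1 / r * n2)\<^sup>2 * (1 / s)"
    unfolding rs using s0 by (simp add: field_simps power2_eq_square)
  finally show ?thesis unfolding s_def .
qed

lemma two_case:
  assumes p2: "p = 2" and pg1: "per p g1" and pg: "per p g"
  shows "(\<Sum>x\<in>{0..<int p}. (cmod (Fc p g1 g x))\<^sup>2) \<le> (\<Sum>u\<in>{0..<int p}. (cmod (g1 u))\<^sup>2) * (\<Sum>u\<in>{0..<int p}. (cmod (g u))\<^sup>2) / real p"
proof -
  have p0: "p > 0" using p2 by simp
  define N1 where "N1 = (\<Sum>u\<in>{0..<int p}. (cmod (g1 u))\<^sup>2)"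
  define N where "N = (\<Sum>u\<in>{0..<int p}. (cmod (g u))\<^sup>2)"
  have pt: "(cmod (Fc p g1 g x))\<^sup>2 \<le> N1 * N / (real p)\<^sup>2" for x
  proof -
    have "(cmod (Fc p g1 g x))\<^sup>2 = (cmod (\<Sum>y\<in>{0..<int p}. g1 (x + y) * g (x + y\<^sup>2)))\<^sup>2 / (real p)\<^sup>2"
      unfolding Fc_def by (simp add: norm_divide power_divide)
    also have "\<dots> \<le> (\<Sum>y\<in>{0..<int p}. (cmod (g1 (x + y)))\<^sup>2) * (\<Sum>y\<in>{0..<int p}. (cmod (g (x + y\<^sup>2)))\<^sup>2) / (real p)\<^sup>2"
      by (intro divide_right_mono CS_c) auto
    also have "(\<Sum>y\<in>{0..<int p}. (cmod (g1 (x + y)))\<^sup>2) = N1"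
      unfolding N1_def using sum_shift[OF p0 per_normsq[OF pg1], where a = x] by (simp add: add.commute)
    also have "(\<Sum>y\<in>{0..<int p}. (cmod (g (x + y\<^sup>2)))\<^sup>2) = (\<Sum>y\<in>{0..<int p}. (cmod (g (x + y)))\<^sup>2)"
    proof (rule sum.cong[OF refl])
      fix y assume "y \<in> {0..<int p}"
      then have "y = 0 \<or> y = 1" using p2 by auto
      then have "y\<^sup>2 = y" by auto
      then show "(cmod (g (x + y\<^sup>2)))\<^sup>2 = (cmod (g (x + y)))\<^sup>2" by simp
    qed
    also have "\<dots> = N"
      unfolding N_def using sum_shift[OF p0 per_normsq[OF pg], where a = x] by (simp add: add.commute)
    finally show ?thesis .
  qed
  have "(\<Sum>x\<in>{0..<int p}. (cmod (Fc p g1 g x))\<^sup>2) \<le> (\<Sum>x\<in>{0..<int p}. N1 * N / (real p)\<^sup>2)"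
    by (rule sum_mono) (rule pt)
  also have "\<dots> = real p * (N1 * N / (real p)\<^sup>2)" by simp
  also have "\<dots> = N1 * N / real p" using p0 by (simp add: power2_eq_square)
  finally show ?thesis unfolding N1_def N_def .
qed



lemma int_main:
  assumes pr: "prime p" and pg1: "per p g1" and pg2: "per p g2"
  shows "sqrt ((\<Sum>x\<in>{0..<int p}. (cmod (Fc p g1 g2 x - (\<Sum>u\<in>{0..<int p}. g1 u) / of_nat p * ((\<Sum>u\<in>{0..<int p}. g2 u) / of_nat p)))\<^sup>2) / real p)
     \<le> 2 * real p powr (-1/10) * sqrt ((\<Sum>u\<in>{0..<int p}. (cmod (g1 u))\<^sup>2) / real p) * sqrt ((\<Sum>u\<in>{0..<int p}. (cmod (g2 u))\<^sup>2) / real p)"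
proof -
  define P where "P = {0..<int p}"
  have p0: "p > 0" using pr prime_gt_0_nat by blast
  have r2: "real p \<ge> 2" using pr prime_ge_2_nat by simp
  define m1 where "m1 = (\<Sum>u\<in>P. g1 u) / of_nat p"
  define m2 where "m2 = (\<Sum>u\<in>P. g2 u) / of_nat p"
  define g2' where "g2' w = g2 w - m2" for w
  have pg2': "per p g2'" using pg2 unfolding per_def g2'_def by metis
  have eqF: "Fc p g1 g2 x - m1 * m2 = Fc p g1 g2' x" for x
    unfolding g2'_def Fc_centered[OF p0 pg1] m1_def P_def by (simp add: mult.commute)
  define A where "A = (\<Sum>x\<in>P. (cmod (Fc p g1 g2' x))\<^sup>2)"
  define N1 where "N1 = (\<Sum>u\<in>P. (cmod (g1 u))\<^sup>2)"
  define N2 where "N2 = (\<Sum>u\<in>P. (cmod (g2 u))\<^sup>2)"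
  define N2' where "N2' = (\<Sum>u\<in>P. (cmod (g2' u))\<^sup>2)"
  have N2le: "N2' \<le> N2" unfolding N2'_def N2_def g2'_def m2_def P_def by (rule centered_norm[OF p0])
  have mz: "(\<Sum>w\<in>{0..<int p}. g2' w) = 0" unfolding g2'_def m2_def P_def by (rule centered_sum[OF p0])
  have A0: "A \<ge> 0" unfolding A_def by (simp add: sum_nonneg)
  have N10: "N1 \<ge> 0" unfolding N1_def by (simp add: sum_nonneg)
  have N20: "N2 \<ge> 0" unfolding N2_def by (simp add: sum_nonneg)
  have N2'0: "N2' \<ge> 0" unfolding N2'_def by (simp add: sum_nonneg)
  have rp: "real p > 0" using p0 by simp
  have H: "(A / real p)\<^sup>2 \<le> 3 * (N1 / real p * (N2 / real p))\<^sup>2 * (1 / sqrt (real p))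
      \<or> (real p = 2 \<and> A / real p \<le> N1 / real p * (N2 / real p))"
  proof (cases "p = 2")
    case True
    have "A \<le> N1 * N2' / real p"
      unfolding A_def N1_def N2'_def P_def by (rule two_case[OF True pg1 pg2'])
    also have "\<dots> \<le> N1 * N2 / real p"
      using N2le N10 rp by (intro divide_right_mono mult_left_mono) auto
    finally have "A \<le> N1 * N2 / real p" .
    then have "A / real p \<le> N1 * N2 / real p / real p" using rp by (intro divide_right_mono) auto
    also have "\<dots> = N1 / real p * (N2 / real p)" by simp
    finally show ?thesis using True by simp
  next
    case False
    have od: "odd p" using pr False prime_odd_nat prime_ge_2_nat by (metis le_neq_implies_less)
    define Nf where "Nf = (\<Sum>eta\<in>{0..<int p}. (cmod (fh p g2' eta))\<^sup>2)"
    have Nfe: "Nf = N2' / real p" unfolding Nf_def N2'_def P_def by (rule parseval[OF p0 pg2'])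
    have Nf0: "Nf \<ge> 0" unfolding Nf_def by (simp add: sum_nonneg)
    have Nfle: "Nf \<le> N2 / real p" unfolding Nfe using N2le rp by (intro divide_right_mono) auto
    define BB where "BB = (\<Sum>x\<in>{0..<int p}. \<Sum>h\<in>{0..<int p}. (cmod (Psi p g2' x h))\<^sup>2)"
    have h1: "A\<^sup>2 \<le> N1\<^sup>2 * BB / (real p)\<^sup>2"
      unfolding A_def N1_def BB_def P_def by (rule step2a[OF p0 pg1 pg2'])
    have "BB \<le> 3 * real p * sqrt (real p) * Nf\<^sup>2"
      unfolding BB_def Nf_def by (rule B_main[OF pr od pg2' mz])
    also have "\<dots> \<le> 3 * real p * sqrt (real p) * (N2 / real p)\<^sup>2"
      using Nf0 Nfle rp by (intro mult_left_mono power_mono) auto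
    finally have h2: "BB \<le> 3 * real p * sqrt (real p) * (N2 / real p)\<^sup>2" .
    show ?thesis using odd_alg[OF rp h1 h2] by simp
  qed
  have "sqrt (A / real p) \<le> 2 * real p powr (-1/10) * sqrt (N1 / real p) * sqrt (N2 / real p)"
    by (rule final_real) (use A0 N10 N20 rp r2 H in simp_all)
  moreover have "(\<Sum>x\<in>P. (cmod (Fc p g1 g2 x - m1 * m2))\<^sup>2) = A"
    unfolding A_def eqF ..
  ultimately show ?thesis unfolding P_def m1_def m2_def N1_def N2_def by simp
qed



lemma sum_nat_int:
  "(\<Sum>n<p. h n) = (\<Sum>x\<in>{0..<int p}. h (nat x))"
proof -
  have "{0..<int p} = int ` {0..<p}" by (simp add: image_int_atLeastLessThan)
  then have "(\<Sum>x\<in>{0..<int p}. h (nat x)) = (\<Sum>n\<in>{0..<p}. h (nat (int n)))"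
    by (simp add: sum.reindex)
  also have "\<dots> = (\<Sum>n<p. h n)" by (simp add: lessThan_atLeast0)
  finally show ?thesis ..
qed

definition lift :: "nat \<Rightarrow> (nat \<Rightarrow> complex) \<Rightarrow> int \<Rightarrow> complex" where
  "lift p f k = f (nat (k mod int p))"

lemma per_lift: "per p (lift p f)"
  unfolding per_def lift_def by simp

lemma lift_nat: assumes "x \<in> {0..<int p}" shows "lift p f x = f (nat x)"
  using assms unfolding lift_def by simp

lemma expect_lift: "expect p f = (\<Sum>x\<in>{0..<int p}. lift p f x) / of_nat p"
  unfolding expect_def sum_nat_int by (simp add: lift_nat)

lemma norm2_lift: "norm2 p f = sqrt ((\<Sum>x\<in>{0..<int p}. (cmod (lift p f x))\<^sup>2) / real p)"
  unfolding norm2_def sum_nat_int by (simp add: lift_nat)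

lemma corrF_lift: "corrF p f1 f2 n = Fc p (lift p f1) (lift p f2) (int n)"
proof -
  have "corrF p f1 f2 n = (\<Sum>y\<in>{0..<int p}. f1 ((n + nat y) mod p) * f2 ((n + (nat y)\<^sup>2) mod p)) / of_nat p"
    unfolding corrF_def sum_nat_int ..
  also have "\<dots> = Fc p (lift p f1) (lift p f2) (int n)"
    unfolding Fc_def
  proof (intro arg_cong[where f = "\<lambda>t. t / of_nat p"] sum.cong refl)
    fix y assume y: "y \<in> {0..<int p}"
    obtain m where m: "y = int m" using y by (metis atLeastLessThan_iff nonneg_int_cases)
    have e1: "nat ((int n + y) mod int p) = (n + nat y) mod p"
      unfolding m by (metis nat_int of_nat_add zmod_int)
    have e2: "nat ((int n + y\<^sup>2) mod int p) = (n + (nat y)\<^sup>2) mod p"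
      unfolding m by (metis nat_int of_nat_add of_nat_power zmod_int)
    show "f1 ((n + nat y) mod p) * f2 ((n + (nat y)\<^sup>2) mod p) = lift p f1 (int n + y) * lift p f2 (int n + y\<^sup>2)"
      unfolding lift_def e1 e2 ..
  qed
  finally show ?thesis .
qed

lemma norm2_corr:
  "norm2 p (\<lambda>x. corrF p f1 f2 x - expect p f1 * expect p f2)
   = sqrt ((\<Sum>x\<in>{0..<int p}. (cmod (Fc p (lift p f1) (lift p f2) x
        - (\<Sum>u\<in>{0..<int p}. lift p f1 u) / of_nat p * ((\<Sum>u\<in>{0..<int p}. lift p f2 u) / of_nat p)))\<^sup>2) / real p)"
  unfolding norm2_def sum_nat_int expect_lift corrF_lift
  by (intro arg_cong[where f = "\<lambda>t. sqrt (t / real p)"] sum.cong refl) simp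

theorem theorem1p1:
  "\<exists>c::real. c > 0 \<and>
     (\<forall>(p::nat) (f1::nat \<Rightarrow> complex) (f2::nat \<Rightarrow> complex). prime p \<longrightarrow>
        norm2 p (\<lambda>x. corrF p f1 f2 x - expect p f1 * expect p f2)
          \<le> c * real p powr (-1/10) * norm2 p f1 * norm2 p f2)"
proof (intro exI[of _ 2] conjI allI impI)
  fix p :: nat and f1 f2 :: "nat \<Rightarrow> complex"
  assume pr: "prime p"
  show "norm2 p (\<lambda>x. corrF p f1 f2 x - expect p f1 * expect p f2)
          \<le> 2 * real p powr (-1/10) * norm2 p f1 * norm2 p f2"
    unfolding norm2_corr norm2_lift[of p f1] norm2_lift[of p f2]
    by (rule int_main[OF pr per_lift per_lift])
qed simp



end
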